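(* Let $m\ge 2$, let $K/F$ be a cyclic Galois field extension of degree $m$ with $\mathrm{Gal}(K/F)=\langle\sigma\rangle$, and suppose $F$ contains a primitive $m$th root of unity $\omega$. Let $d\in K\setminus F$ and suppose that the nonassociative cyclic algebra $A=(K/F,\sigma,d)$ is a division algebra. Then $A$ is a nonassociative cyclic extension of $K$ of degree $m$, and the corresponding cyclic subgroup of order $m$ of $\mathrm{Aut}_F(A)$ is generated by the automorphism $H_{\mathrm{id},\omega}$.
   Context: For a field $K$ and $\sigma\in\mathrm{Aut}(K)$, the twisted polynomial ring $K[t;\sigma]$ consists of polynomials $\sum a_it^i$ ($a_i\in K$) with termwise addition and multiplication determined by $ta=\sigma(a)t$. For $f=t^m-d\in K[t;\sigma]$, $d\in K^\times$, every $g$ can be uniquely written $g=qf+r$ with $\deg r<m$ (right division); the nonassociative cyclic algebra $(K/F,\sigma,d)$ is the $F$-vector space of polynomials of degree $<m$ with multiplication $g\circ h=$ remainder of $gh$ on right division by $f$; it is a unital (generally nonassociative) algebra over $F$ containing $K$. For $k\in K$ with $N_{K/F}(k)=1$, $H_{\mathrm{id},k}(\sum_{i=0}^{m-1}a_it^i)=a_0+\sum_{i=1}^{m-1}a_i\big(\prod_{l=0}^{i-1}\sigma^l(k)\big)t^i$. An algebra $A\ne0$ is a division algebra if left and right multiplication by every nonzero element are bijective. Definition: if $A$ is a nonassociative division algebra and $D\subseteq A$ an associative division subalgebra, $A$ is a nonassociative cyclic extension of $D$ of degree $m$ if $A$ is a free left $D$-module of rank $m$ and $\mathrm{Aut}(A)$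 has a cyclic subgroup $G$ of order $m$ such that $H|_D=\mathrm{id}_D$ for all $H\in G$. *)

theory Defs
  imports Main "HOL-Library.FuncSet"
begin

text \<open>The field K is the whole type 'k; the base field F is a subset of it.
  Elements of K[t;sigma] are coefficient functions nat => 'k (with finite support).\<close>

definition subfield :: "'k::field set \<Rightarrow> bool" where
  "subfield F \<longleftrightarrow> 0 \<in> F \<and> 1 \<in> F \<and>
     (\<forall>x\<in>F. \<forall>y\<in>F. x + y \<in> F \<and> x - y \<in> F \<and> x * y \<in> F) \<and>
     (\<forall>x\<in>F. inverse x \<in> F)"

definition field_aut :: "('k::field \<Rightarrow> 'k) \<Rightarrow> bool" where
  "field_aut s \<longleftrightarrow> bij s \<and> (\<forall>x y. s (x + y) = s x + s y) \<and> (\<forall>x y. s (x * y) = s x * s y)"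

definition Gal :: "'k::field set \<Rightarrow> ('k \<Rightarrow> 'k) set" where
  "Gal F = {s. field_aut s \<and> (\<forall>x\<in>F. s x = x)}"

definition ext_degree :: "'k::field set \<Rightarrow> nat \<Rightarrow> bool" where
  "ext_degree F n \<longleftrightarrow> (\<exists>b :: nat \<Rightarrow> 'k.
     (\<forall>x. \<exists>c. (\<forall>i<n. c i \<in> F) \<and> x = (\<Sum>i<n. c i * b i)) \<and>
     (\<forall>c. (\<forall>i<n. c i \<in> F) \<and> (\<Sum>i<n. c i * b i) = 0 \<longrightarrow> (\<forall>i<n. c i = 0)))"

definition cyclic_galois :: "'k::field set \<Rightarrow> ('k \<Rightarrow> 'k) \<Rightarrow> nat \<Rightarrow> bool" where
  "cyclic_galois F \<sigma> m \<longleftrightarrow> subfield F \<and> ext_degree F m \<and> finite (Gal F) \<and>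
     card (Gal F) = m \<and> Gal F = {\<sigma> ^^ i | i. True}"

definition primitive_root :: "'k::field \<Rightarrow> nat \<Rightarrow> bool" where
  "primitive_root w m \<longleftrightarrow> w ^ m = 1 \<and> (\<forall>i. 0 < i \<and> i < m \<longrightarrow> w ^ i \<noteq> 1)"

text \<open>Multiplication in K[t;sigma]: (sum g_i t^i)(sum h_j t^j), using t a = sigma(a) t.\<close>
definition tmul :: "('k::field \<Rightarrow> 'k) \<Rightarrow> (nat \<Rightarrow> 'k) \<Rightarrow> (nat \<Rightarrow> 'k) \<Rightarrow> (nat \<Rightarrow> 'k)" where
  "tmul \<sigma> g h = (\<lambda>n. \<Sum>i\<le>n. g i * (\<sigma> ^^ i) (h (n - i)))"

definition tpoly :: "(nat \<Rightarrow> 'k::zero) \<Rightarrow> bool" where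
  "tpoly g \<longleftrightarrow> (\<exists>N. \<forall>n\<ge>N. g n = 0)"

definition fpoly :: "nat \<Rightarrow> 'k::field \<Rightarrow> (nat \<Rightarrow> 'k)" where
  "fpoly m d = (\<lambda>n. if n = m then 1 else if n = 0 then - d else 0)"

definition rrem :: "('k::field \<Rightarrow> 'k) \<Rightarrow> nat \<Rightarrow> 'k \<Rightarrow> (nat \<Rightarrow> 'k) \<Rightarrow> (nat \<Rightarrow> 'k)" where
  "rrem \<sigma> m d g = (THE r. (\<forall>n\<ge>m. r n = 0) \<and>
      (\<exists>q. tpoly q \<and> g = (\<lambda>n. tmul \<sigma> q (fpoly m d) n + r n)))"

text \<open>Underlying set of the nonassociative cyclic algebra (K/F,sigma,d):
  polynomials of degree < m.\<close>
definition ncarrier :: "nat \<Rightarrow> (nat \<Rightarrow> 'k::zero) set" where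
  "ncarrier m = {a. \<forall>n\<ge>m. a n = 0}"

definition nmul :: "('k::field \<Rightarrow> 'k) \<Rightarrow> nat \<Rightarrow> 'k \<Rightarrow> (nat \<Rightarrow> 'k) \<Rightarrow> (nat \<Rightarrow> 'k) \<Rightarrow> (nat \<Rightarrow> 'k)" where
  "nmul \<sigma> m d g h = rrem \<sigma> m d (tmul \<sigma> g h)"

definition nadd :: "(nat \<Rightarrow> 'k::field) \<Rightarrow> (nat \<Rightarrow> 'k) \<Rightarrow> (nat \<Rightarrow> 'k)" where
  "nadd x y = (\<lambda>n. x n + y n)"

definition nscal :: "'k::field \<Rightarrow> (nat \<Rightarrow> 'k) \<Rightarrow> (nat \<Rightarrow> 'k)" where
  "nscal c x = (\<lambda>n. c * x n)"

definition nconst :: "'k::field \<Rightarrow> (nat \<Rightarrow> 'k)" where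
  "nconst k = (\<lambda>n. if n = 0 then k else 0)"

definition division_alg :: "(nat \<Rightarrow> 'k::field) set \<Rightarrow> ((nat \<Rightarrow> 'k) \<Rightarrow> (nat \<Rightarrow> 'k) \<Rightarrow> (nat \<Rightarrow> 'k)) \<Rightarrow> bool" where
  "division_alg Ac mul \<longleftrightarrow> Ac \<noteq> {\<lambda>n. 0} \<and>
     (\<forall>a\<in>Ac. a \<noteq> (\<lambda>n. 0) \<longrightarrow> bij_betw (\<lambda>x. mul a x) Ac Ac \<and> bij_betw (\<lambda>x. mul x a) Ac Ac)"

definition alg_aut :: "'k::field set \<Rightarrow> (nat \<Rightarrow> 'k) set \<Rightarrow> ((nat \<Rightarrow> 'k) \<Rightarrow> (nat \<Rightarrow> 'k) \<Rightarrow> (nat \<Rightarrow> 'k))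
     \<Rightarrow> ((nat \<Rightarrow> 'k) \<Rightarrow> (nat \<Rightarrow> 'k)) \<Rightarrow> bool" where
  "alg_aut F Ac mul h \<longleftrightarrow> bij_betw h Ac Ac \<and>
     (\<forall>x\<in>Ac. \<forall>y\<in>Ac. h (nadd x y) = nadd (h x) (h y)) \<and>
     (\<forall>c\<in>F. \<forall>x\<in>Ac. h (nscal c x) = nscal c (h x)) \<and>
     (\<forall>x\<in>Ac. \<forall>y\<in>Ac. h (mul x y) = mul (h x) (h y))"

definition cyc_gen :: "(nat \<Rightarrow> 'k) set \<Rightarrow> ((nat \<Rightarrow> 'k) \<Rightarrow> (nat \<Rightarrow> 'k)) \<Rightarrow> ((nat \<Rightarrow> 'k) \<Rightarrow> (nat \<Rightarrow> 'k)) set" where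
  "cyc_gen Ac h = {restrict (h ^^ i) Ac | i. True}"

definition cyc_ext_group :: "'k::field set \<Rightarrow> (nat \<Rightarrow> 'k) set \<Rightarrow> ((nat \<Rightarrow> 'k) \<Rightarrow> (nat \<Rightarrow> 'k) \<Rightarrow> (nat \<Rightarrow> 'k))
     \<Rightarrow> (nat \<Rightarrow> 'k) set \<Rightarrow> nat \<Rightarrow> ((nat \<Rightarrow> 'k) \<Rightarrow> (nat \<Rightarrow> 'k)) set \<Rightarrow> bool" where
  "cyc_ext_group F Ac mul D m G \<longleftrightarrow>
     (\<exists>h. alg_aut F Ac mul h \<and> G = cyc_gen Ac h) \<and>
     (\<forall>g\<in>G. alg_aut F Ac mul g) \<and> finite G \<and> card G = m \<and>
     (\<forall>g\<in>G. \<forall>x\<in>D. g x = x)"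

definition assoc_div_subalg :: "(nat \<Rightarrow> 'k::field) set \<Rightarrow> ((nat \<Rightarrow> 'k) \<Rightarrow> (nat \<Rightarrow> 'k) \<Rightarrow> (nat \<Rightarrow> 'k))
     \<Rightarrow> (nat \<Rightarrow> 'k) \<Rightarrow> (nat \<Rightarrow> 'k) set \<Rightarrow> bool" where
  "assoc_div_subalg Ac mul one D \<longleftrightarrow> D \<subseteq> Ac \<and> one \<in> D \<and>
     (\<forall>x\<in>D. \<forall>y\<in>D. nadd x y \<in> D \<and> mul x y \<in> D) \<and>
     (\<forall>x\<in>D. (\<lambda>n. - x n) \<in> D) \<and>
     (\<forall>x\<in>D. \<forall>y\<in>D. \<forall>z\<in>D. mul (mul x y) z = mul x (mul y z)) \<and>
     D \<noteq> {\<lambda>n. 0} \<and>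
     (\<forall>a\<in>D. a \<noteq> (\<lambda>n. 0) \<longrightarrow> bij_betw (\<lambda>x. mul a x) D D \<and> bij_betw (\<lambda>x. mul x a) D D)"

definition free_left_module :: "(nat \<Rightarrow> 'k::field) set \<Rightarrow> ((nat \<Rightarrow> 'k) \<Rightarrow> (nat \<Rightarrow> 'k) \<Rightarrow> (nat \<Rightarrow> 'k))
     \<Rightarrow> (nat \<Rightarrow> 'k) set \<Rightarrow> nat \<Rightarrow> bool" where
  "free_left_module Ac mul D m \<longleftrightarrow> (\<exists>b :: nat \<Rightarrow> (nat \<Rightarrow> 'k). (\<forall>i<m. b i \<in> Ac) \<and>
     (\<forall>x\<in>Ac. \<exists>c. (\<forall>i<m. c i \<in> D) \<and> x = (\<lambda>n. \<Sum>i<m. mul (c i) (b i) n)) \<and>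
     (\<forall>c. (\<forall>i<m. c i \<in> D) \<and> (\<lambda>n. \<Sum>i<m. mul (c i) (b i) n) = (\<lambda>n. 0)
          \<longrightarrow> (\<forall>i<m. c i = (\<lambda>n. 0))))"

definition nacyc_ext :: "'k::field set \<Rightarrow> (nat \<Rightarrow> 'k) set \<Rightarrow> ((nat \<Rightarrow> 'k) \<Rightarrow> (nat \<Rightarrow> 'k) \<Rightarrow> (nat \<Rightarrow> 'k))
     \<Rightarrow> (nat \<Rightarrow> 'k) \<Rightarrow> (nat \<Rightarrow> 'k) set \<Rightarrow> nat \<Rightarrow> bool" where
  "nacyc_ext F Ac mul one D m \<longleftrightarrow> division_alg Ac mul \<and> assoc_div_subalg Ac mul one D \<and>
     free_left_module Ac mul D m \<and> (\<exists>G. cyc_ext_group F Ac mul D m G)"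

definition Hk :: "('k::field \<Rightarrow> 'k) \<Rightarrow> nat \<Rightarrow> 'k \<Rightarrow> (nat \<Rightarrow> 'k) \<Rightarrow> (nat \<Rightarrow> 'k)" where
  "Hk \<sigma> m k a = (\<lambda>n. if n = 0 then a 0
      else if n < m then a n * (\<Prod>l<n. (\<sigma> ^^ l) k) else 0)"

end

theory Submission imports Defs begin

locale tw =
  fixes \<sigma> :: "'k::field \<Rightarrow> 'k" and m :: nat and d :: 'k
  assumes sadd: "\<And>x y. \<sigma> (x+y) = \<sigma> x + \<sigma> y"
  and smul: "\<And>x y. \<sigma> (x*y) = \<sigma> x * \<sigma> y"
  and sone: "\<sigma> 1 = 1"
  and mpos: "m \<ge> 1"
begin

lemma pow_add: "(\<sigma>^^i) (x+y) = (\<sigma>^^i) x + (\<sigma>^^i) y"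
  by (induct i) (auto simp: sadd)
lemma pow_mul: "(\<sigma>^^i) (x*y) = (\<sigma>^^i) x * (\<sigma>^^i) y"
  by (induct i) (auto simp: smul)
lemma pow_one: "(\<sigma>^^i) 1 = 1"
  by (induct i) (auto simp: sone)
lemma s_zero: "\<sigma> 0 = 0"
proof -
  have "\<sigma> 0 + \<sigma> 0 = \<sigma> 0 + 0" using sadd[of 0 0] by simp
  then show ?thesis by (rule add_left_imp_eq)
qed
lemma pow_zero: "(\<sigma>^^i) 0 = 0"
  by (induct i) (auto simp: s_zero)
lemma pow_neg: "(\<sigma>^^i) (-x) = - (\<sigma>^^i) x"
proof -
  have "(\<sigma>^^i) 0 = (\<sigma>^^i) (-x) + (\<sigma>^^i) x" using pow_add[of i "-x" x] by simp
  then show ?thesis by (simp add: pow_zero eq_neg_iff_add_eq_0)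
qed
lemma pow_fix: "\<sigma> c = c \<Longrightarrow> (\<sigma>^^i) c = c"
  by (induct i) auto
lemma pow_fix_power: "\<sigma> c = c \<Longrightarrow> (\<sigma>^^i) (c^j * x) = c^j * (\<sigma>^^i) x"
  by (induct j) (auto simp: pow_mul pow_fix)

lemma tmul_f: "tmul \<sigma> q (fpoly m d) n = (if m \<le> n then q (n-m) else 0) - q n * (\<sigma>^^n) d"
proof -
  have "tmul \<sigma> q (fpoly m d) n = (\<Sum>i\<le>n. (if i = n - m then (if m \<le> n then q i else 0) else 0)
        + (if i = n then - (q n * (\<sigma>^^n) d) else 0))"
    unfolding tmul_def using mpos
    by (intro sum.cong) (auto simp: fpoly_def pow_one pow_zero pow_neg)
  also have "\<dots> = (if m \<le> n then q (n-m) else 0) - q n * (\<sigma>^^n) d"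
    by (simp add: sum.distrib)
  finally show ?thesis .
qed

definition rep where "rep g q r \<longleftrightarrow> tpoly q \<and> (\<forall>n\<ge>m. r n = 0) \<and>
   g = (\<lambda>n. tmul \<sigma> q (fpoly m d) n + r n)"

lemma rep_unique:
  assumes "rep g q r" "rep g q' r'"
  shows "r = r'"
proof -
  define p where "p = (\<lambda>k. q k - q' k)"
  obtain N1 where N1: "\<forall>n\<ge>N1. q n = 0" using assms(1) by (auto simp: rep_def tpoly_def)
  obtain N2 where N2: "\<forall>n\<ge>N2. q' n = 0" using assms(2) by (auto simp: rep_def tpoly_def)
  have eq: "\<And>n. tmul \<sigma> q (fpoly m d) n + r n = tmul \<sigma> q' (fpoly m d) n + r' n"
    using assms by (auto simp: rep_def fun_eq_iff)
  have rec: "p k = p (k+m) * (\<sigma>^^(k+m)) d" for k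
  proof -
    have "r (k+m) = 0" "r' (k+m) = 0" using assms by (auto simp: rep_def)
    with eq[of "k+m"] show ?thesis by (simp add: tmul_f p_def algebra_simps)
  qed
  have ind: "\<forall>k. N1 + N2 \<le> k + j*m \<longrightarrow> p k = 0" for j
  proof (induct j)
    case 0 then show ?case using N1 N2 by (auto simp: p_def)
  next
    case (Suc j)
    show ?case
    proof (intro allI impI)
      fix k assume "N1 + N2 \<le> k + Suc j * m"
      then have "N1 + N2 \<le> (k+m) + j*m" by simp
      with Suc have "p (k+m) = 0" by blast
      with rec[of k] show "p k = 0" by simp
    qed
  qed
  have p0: "p k = 0" for k
  proof -
    have "N1 + N2 \<le> k + (N1+N2)*m" using mpos
      by (metis le_add2 le_trans mult.right_neutral mult_le_mono2)
    with ind show ?thesis by blast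
  qed
  show ?thesis
  proof
    fix n show "r n = r' n"
    proof (cases "m \<le> n")
      case True then show ?thesis using assms by (auto simp: rep_def)
    next
      case False
      have "q n = q' n" using p0[of n] by (simp add: p_def)
      with eq[of n] False show ?thesis by (simp add: tmul_f)
    qed
  qed
qed

end

fun Qf :: "('k::field \<Rightarrow> 'k) \<Rightarrow> nat \<Rightarrow> 'k \<Rightarrow> (nat \<Rightarrow> 'k) \<Rightarrow> nat \<Rightarrow> nat \<Rightarrow> 'k" where
  "Qf \<sigma> m d g 0 k = 0"
| "Qf \<sigma> m d g (Suc j) k = g (k+m) + Qf \<sigma> m d g j (k+m) * (\<sigma>^^(k+m)) d"

lemma Qf_zero: "\<forall>n\<ge>N. g n = 0 \<Longrightarrow> N \<le> k \<Longrightarrow> Qf \<sigma> m d g j k = 0"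
  by (induct j arbitrary: k) auto

lemma Qf_stab: "\<forall>n\<ge>N. g n = 0 \<Longrightarrow> N \<le> k + j*m \<Longrightarrow> Qf \<sigma> m d g (Suc j) k = Qf \<sigma> m d g j k"
proof (induct j arbitrary: k)
  case 0 then show ?case by auto
next
  case (Suc j)
  have "N \<le> (k+m) + j*m" using Suc.prems by simp
  with Suc.hyps[of "k+m"] Suc.prems show ?case by simp
qed

context tw begin

lemma rep_exists:
  assumes "tpoly g" shows "\<exists>q r. rep g q r"
proof -
  obtain N where N: "\<forall>n\<ge>N. g n = 0" using assms by (auto simp: tpoly_def)
  define q where "q = Qf \<sigma> m d g (Suc N)"
  have qrec: "q k = g (k+m) + q (k+m) * (\<sigma>^^(k+m)) d" for k
  proof -
    have "N \<le> (k+m) + N*m" using mpos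
      by (metis le_add2 le_trans mult.right_neutral mult_le_mono2 add.commute)
    then have "Qf \<sigma> m d g (Suc N) (k+m) = Qf \<sigma> m d g N (k+m)" using Qf_stab[OF N] by blast
    then show ?thesis by (simp add: q_def)
  qed
  have tq: "tpoly q" unfolding tpoly_def q_def using Qf_zero[OF N] by blast
  define r where "r = (\<lambda>n. if n < m then g n - tmul \<sigma> q (fpoly m d) n else 0)"
  have "g = (\<lambda>n. tmul \<sigma> q (fpoly m d) n + r n)"
  proof
    fix n show "g n = tmul \<sigma> q (fpoly m d) n + r n"
    proof (cases "n < m")
      case True then show ?thesis by (simp add: r_def)
    next
      case False
      then obtain k where k: "n = k + m" by (metis add.commute le_add_diff_inverse not_less)
      show ?thesis using qrec[of k] by (simp add: k r_def tmul_f)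
    qed
  qed
  then have "rep g q r" using tq by (auto simp: rep_def r_def)
  then show ?thesis by blast
qed

lemma rrem_eq: assumes "rep g q r" shows "rrem \<sigma> m d g = r"
  unfolding rrem_def
proof (rule the_equality)
  show "(\<forall>n\<ge>m. r n = 0) \<and> (\<exists>q. tpoly q \<and> g = (\<lambda>n. tmul \<sigma> q (fpoly m d) n + r n))"
    using assms by (auto simp: rep_def)
  fix r' assume "(\<forall>n\<ge>m. r' n = 0) \<and> (\<exists>q. tpoly q \<and> g = (\<lambda>n. tmul \<sigma> q (fpoly m d) n + r' n))"
  then have "\<exists>q'. rep g q' r'" by (auto simp: rep_def)
  then show "r' = r" using rep_unique assms by blast
qed

lemma rrem_rep: assumes "tpoly g" shows "\<exists>q. rep g q (rrem \<sigma> m d g)"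
  using rep_exists[OF assms] rrem_eq by blast

end

definition sc :: "'k::field \<Rightarrow> (nat \<Rightarrow> 'k) \<Rightarrow> (nat \<Rightarrow> 'k)" where
  "sc c a = (\<lambda>n. c^n * a n)"

context tw begin

lemma tpoly_tmul: assumes "a \<in> ncarrier m" "b \<in> ncarrier m" shows "tpoly (tmul \<sigma> a b)"
  unfolding tpoly_def
proof (intro exI allI impI)
  fix n assume n: "2*m \<le> n"
  have "a i * (\<sigma>^^i) (b (n-i)) = 0" if "i \<le> n" for i
  proof (cases "m \<le> i")
    case True then show ?thesis using assms by (auto simp: ncarrier_def)
  next
    case False then have "m \<le> n - i" using n by linarith
    then show ?thesis using assms by (auto simp: ncarrier_def pow_zero)
  qed
  then show "tmul \<sigma> a b n = 0" unfolding tmul_def by (auto intro!: sum.neutral)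
qed

lemma rrem_in: assumes "tpoly g" shows "rrem \<sigma> m d g \<in> ncarrier m"
  using rrem_rep[OF assms] by (auto simp: rep_def ncarrier_def)

lemma nmul_in: "a \<in> ncarrier m \<Longrightarrow> b \<in> ncarrier m \<Longrightarrow> nmul \<sigma> m d a b \<in> ncarrier m"
  unfolding nmul_def by (intro rrem_in tpoly_tmul)

lemma rrem_id: assumes "r \<in> ncarrier m" shows "rrem \<sigma> m d r = r"
proof -
  have "rep r (\<lambda>_. 0) r" using assms by (auto simp: rep_def tpoly_def ncarrier_def tmul_def)
  then show ?thesis by (rule rrem_eq)
qed

lemma tmul_sc: assumes "\<sigma> c = c" shows "tmul \<sigma> (sc c a) (sc c b) = sc c (tmul \<sigma> a b)"
proof
  fix n
  have "tmul \<sigma> (sc c a) (sc c b) n = (\<Sum>i\<le>n. c^n * (a i * (\<sigma>^^i) (b (n-i))))"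
    unfolding tmul_def sc_def
  proof (intro sum.cong refl)
    fix i assume "i \<in> {..n}"
    then have "c^n = c^i * c^(n-i)" by (simp add: power_add[symmetric])
    then show "c ^ i * a i * (\<sigma> ^^ i) (c ^ (n - i) * b (n - i)) = c ^ n * (a i * (\<sigma> ^^ i) (b (n - i)))"
      using pow_fix_power[OF assms] by (simp add: algebra_simps)
  qed
  then show "tmul \<sigma> (sc c a) (sc c b) n = sc c (tmul \<sigma> a b) n"
    by (simp add: sc_def tmul_def sum_distrib_left)
qed

lemma tmul_f_sc: assumes "c^m = 1"
  shows "tmul \<sigma> (sc c q) (fpoly m d) = sc c (tmul \<sigma> q (fpoly m d))"
proof
  fix n
  have "m \<le> n \<Longrightarrow> c^(n-m) = c^n" using assms by (metis le_add_diff_inverse2 mult.right_neutral power_add)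
  then show "tmul \<sigma> (sc c q) (fpoly m d) n = sc c (tmul \<sigma> q (fpoly m d)) n"
    by (auto simp: tmul_f sc_def algebra_simps)
qed

lemma sc_in: "a \<in> ncarrier m \<Longrightarrow> sc c a \<in> ncarrier m"
  by (auto simp: sc_def ncarrier_def)

lemma rrem_sc: assumes "tpoly g" "c^m = 1"
  shows "rrem \<sigma> m d (sc c g) = sc c (rrem \<sigma> m d g)"
proof -
  obtain q where q: "rep g q (rrem \<sigma> m d g)" using rrem_rep[OF assms(1)] by blast
  have "rep (sc c g) (sc c q) (sc c (rrem \<sigma> m d g))"
  proof -
    have e: "g = (\<lambda>n. tmul \<sigma> q (fpoly m d) n + rrem \<sigma> m d g n)" and t: "tpoly q"
      and z: "\<forall>n\<ge>m. rrem \<sigma> m d g n = 0" using q by (auto simp: rep_def)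
    have "sc c g = (\<lambda>n. tmul \<sigma> (sc c q) (fpoly m d) n + sc c (rrem \<sigma> m d g) n)"
      unfolding tmul_f_sc[OF assms(2)] by (subst e) (simp add: sc_def algebra_simps)
    moreover have "tpoly (sc c q)" using t by (auto simp: tpoly_def sc_def)
    ultimately show ?thesis using z by (auto simp: rep_def sc_def)
  qed
  then show ?thesis by (rule rrem_eq)
qed

lemma nmul_sc: assumes "a \<in> ncarrier m" "b \<in> ncarrier m" "\<sigma> c = c" "c^m = 1"
  shows "nmul \<sigma> m d (sc c a) (sc c b) = sc c (nmul \<sigma> m d a b)"
  unfolding nmul_def tmul_sc[OF assms(3)] using rrem_sc[OF tpoly_tmul[OF assms(1,2)] assms(4)] .

lemma nconst_mul: "nmul \<sigma> m d (nconst a) (nconst b) = nconst (a*b)"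
proof -
  have "tmul \<sigma> (nconst a) (nconst b) = nconst (a*b)"
    unfolding tmul_def nconst_def fun_eq_iff
  proof
    fix n
    have "(\<Sum>i\<le>n. (if i = 0 then a else 0) * (\<sigma> ^^ i) (if n - i = 0 then b else 0))
        = (\<Sum>i\<le>n. if i = 0 then a * (if n = 0 then b else 0) else 0)"
      by (intro sum.cong) (auto simp: pow_zero)
    then show "(\<Sum>i\<le>n. (if i = 0 then a else 0) * (\<sigma> ^^ i) (if n - i = 0 then b else 0)) =
         (if n = 0 then a * b else 0)" by simp
  qed
  moreover have "nconst (a*b) \<in> ncarrier m" using mpos by (auto simp: nconst_def ncarrier_def)
  ultimately show ?thesis unfolding nmul_def using rrem_id by simp
qed

lemma nconst_mul_e: "nmul \<sigma> m d (nconst a) (\<lambda>n. if n = i then 1 else 0) = (\<lambda>n. if n = i then a else 0)"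
  if "i < m"
proof -
  have "tmul \<sigma> (nconst a) (\<lambda>n. if n = i then 1 else 0) = (\<lambda>n. if n = i then a else 0)"
    unfolding tmul_def nconst_def fun_eq_iff
  proof
    fix n
    have "(\<Sum>j\<le>n. (if j = 0 then a else 0) * (\<sigma> ^^ j) (if n - j = i then 1 else 0))
        = (\<Sum>j\<le>n. if j = 0 then (if n = i then a else 0) else 0)"
      by (intro sum.cong) auto
    then show "(\<Sum>j\<le>n. (if j = 0 then a else 0) * (\<sigma> ^^ j) (if n - j = i then 1 else 0)) =
         (if n = i then a else 0)" by simp
  qed
  moreover have "(\<lambda>n. if n = i then a else 0) \<in> ncarrier m" using that by (auto simp: ncarrier_def)
  ultimately show ?thesis unfolding nmul_def using rrem_id by simp
qed

end

context tw begin

lemma sc_inv: "c \<noteq> 0 \<Longrightarrow> sc (inverse c) (sc c x) = x"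
  by (auto simp: sc_def fun_eq_iff power_inverse[symmetric] power_mult_distrib[symmetric])

lemma aut_sc:
  assumes "\<sigma> c = c" "c^m = 1" "\<forall>x\<in>ncarrier m. h x = sc c x"
  shows "alg_aut F (ncarrier m) (nmul \<sigma> m d) h"
proof -
  have c0: "c \<noteq> 0" using assms(2) mpos by (metis one_neq_zero power_0_left not_one_le_zero)
  have c0': "inverse c \<noteq> 0" using c0 by simp
  have "bij_betw (sc c) (ncarrier m) (ncarrier m)"
    by (rule bij_betw_byWitness[where f'="sc (inverse c)"])
       (auto simp: sc_inv c0 sc_in inverse_inverse_eq[of c] sc_inv[OF c0', simplified])
  then have b: "bij_betw h (ncarrier m) (ncarrier m)"
    using assms(3) bij_betw_cong by metis
  have ad: "nadd x y \<in> ncarrier m" if "x \<in> ncarrier m" "y \<in> ncarrier m" for x y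
    using that by (auto simp: nadd_def ncarrier_def)
  have sm: "nscal k x \<in> ncarrier m" if "x \<in> ncarrier m" for x k
    using that by (auto simp: nscal_def ncarrier_def)
  have h: "h x = sc c x" if "x \<in> ncarrier m" for x using assms(3) that by blast
  have 1: "h (nadd x y) = nadd (h x) (h y)" if "x \<in> ncarrier m" "y \<in> ncarrier m" for x y
    using h[OF ad[OF that]] h[OF that(1)] h[OF that(2)] by (simp add: sc_def nadd_def algebra_simps)
  have 2: "h (nscal k x) = nscal k (h x)" if "x \<in> ncarrier m" for x k
    using h[OF sm[OF that]] h[OF that] by (simp add: sc_def nscal_def algebra_simps)
  have 3: "h (nmul \<sigma> m d x y) = nmul \<sigma> m d (h x) (h y)" if "x \<in> ncarrier m" "y \<in> ncarrier m" for x y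
    using h[OF nmul_in[OF that]] h[OF that(1)] h[OF that(2)] nmul_sc[OF that assms(1,2)] by simp
  show ?thesis unfolding alg_aut_def using b 1 2 3 by blast
qed

end

theorem theorem2p3:
  fixes F :: "'k::field set" and \<sigma> :: "'k \<Rightarrow> 'k" and m :: nat and d \<omega> :: 'k
  assumes "m \<ge> 2"
    and "cyclic_galois F \<sigma> m"
    and "\<omega> \<in> F" and "primitive_root \<omega> m"
    and "d \<notin> F"
    and "division_alg (ncarrier m) (nmul \<sigma> m d)"
  shows "nacyc_ext F (ncarrier m) (nmul \<sigma> m d) (nconst 1) (range nconst) m \<and>
         cyc_ext_group F (ncarrier m) (nmul \<sigma> m d) (range nconst) m
           (cyc_gen (ncarrier m) (Hk \<sigma> m \<omega>))"
proof -
  let ?A = "ncarrier m :: (nat \<Rightarrow> 'k) set"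
  let ?mul = "nmul \<sigma> m d"
  let ?H = "Hk \<sigma> m \<omega>"
  let ?D = "range nconst :: (nat \<Rightarrow> 'k) set"
  have "\<sigma> = \<sigma>^^1" by simp
  then have "\<sigma> \<in> Gal F" using assms(2) unfolding cyclic_galois_def by blast
  then have fa: "field_aut \<sigma>" and fixF: "\<forall>x\<in>F. \<sigma> x = x" by (auto simp: Gal_def)
  have sadd: "\<And>x y. \<sigma> (x+y) = \<sigma> x + \<sigma> y" and smul: "\<And>x y. \<sigma> (x*y) = \<sigma> x * \<sigma> y"
    using fa by (auto simp: field_aut_def)
  have "surj \<sigma>" using fa by (auto simp: field_aut_def bij_def)
  then obtain x where x: "\<sigma> x = 1" by (metis surjD)
  have "\<sigma> 1 * \<sigma> x = \<sigma> x" using smul[of 1 x] by simp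
  then have sone: "\<sigma> 1 = 1" using x by simp
  interpret tw \<sigma> m d using sadd smul sone assms(1) by unfold_locales auto
  have sw: "\<sigma> \<omega> = \<omega>" using fixF assms(3) by blast
  have wm: "\<omega>^m = 1" using assms(4) by (simp add: primitive_root_def)
  have Hsc: "?H x = sc \<omega> x" if "x \<in> ?A" for x
  proof
    fix n
    have "(\<Prod>l<n. (\<sigma>^^l) \<omega>) = \<omega>^n" using pow_fix[OF sw] by simp
    then show "?H x n = sc \<omega> x n" using that
      by (auto simp: Hk_def sc_def ncarrier_def)
  qed
  have swi: "\<sigma> (\<omega>^i) = \<omega>^i" for i by (induct i) (auto simp: smul sone sw)
  have wmi: "(\<omega>^i)^m = 1" for i using wm by (metis power_mult mult.commute power_one)
  have Hpow: "(?H^^i) x = sc (\<omega>^i) x" if "x \<in> ?A" for x i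
  proof (induct i)
    case 0 then show ?case by (simp add: sc_def)
  next
    case (Suc i)
    have "(?H^^Suc i) x = ?H (sc (\<omega>^i) x)" using Suc by simp
    also have "\<dots> = sc \<omega> (sc (\<omega>^i) x)" using Hsc sc_in that by blast
    also have "\<dots> = sc (\<omega>^Suc i) x" by (simp add: sc_def fun_eq_iff power_mult_distrib algebra_simps)
    finally show ?case .
  qed
  have autH: "alg_aut F ?A ?mul ?H" using aut_sc[OF sw wm] Hsc by blast
  have G_eq: "cyc_gen ?A ?H = (\<lambda>i. restrict (sc (\<omega>^i)) ?A) ` UNIV"
    unfolding cyc_gen_def using Hpow by (auto intro!: restrict_ext)
  have autG: "\<forall>g\<in>cyc_gen ?A ?H. alg_aut F ?A ?mul g"
    unfolding G_eq by (auto intro!: aut_sc[OF swi wmi])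
  have fixD: "\<forall>g\<in>cyc_gen ?A ?H. \<forall>x\<in>?D. g x = x"
  proof -
    have "nconst k \<in> ?A" for k using assms(1) by (auto simp: nconst_def ncarrier_def)
    then show ?thesis unfolding G_eq by (auto simp: sc_def nconst_def fun_eq_iff)
  qed
  have w0: "\<omega> \<noteq> 0" using wm assms(1) by (cases m) auto
  have G_eq2: "cyc_gen ?A ?H = (\<lambda>i. restrict (sc (\<omega>^i)) ?A) ` {..<m}"
  proof -
    have "\<omega>^i = \<omega>^(i mod m)" for i
      by (metis div_mult_mod_eq power_add power_mult wm power_one mult_1 mult.commute)
    then show ?thesis unfolding G_eq using assms(1) by (auto simp: image_iff intro!: bexI[of _ "_ mod m"])
  qed
  have inj: "inj_on (\<lambda>i. restrict (sc (\<omega>^i)) ?A) {..<m}"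
  proof (rule inj_onI)
    fix i j assume ij: "i \<in> {..<m}" "j \<in> {..<m}" and eq: "restrict (sc (\<omega>^i)) ?A = restrict (sc (\<omega>^j)) ?A"
    define e where "e = (\<lambda>n::nat. if n = 1 then (1::'k) else 0)"
    have "e \<in> ?A" using assms(1) by (auto simp: e_def ncarrier_def)
    then have "sc (\<omega>^i) e 1 = sc (\<omega>^j) e 1" using eq by (metis restrict_apply')
    then have wij: "\<omega>^i = \<omega>^j" by (simp add: sc_def e_def)
    have key: "a < b \<Longrightarrow> b < m \<Longrightarrow> \<omega>^a = \<omega>^b \<Longrightarrow> False" for a b
    proof -
      assume ab: "a < b" "b < m" "\<omega>^a = \<omega>^b"
      have "\<omega>^b = \<omega>^a * \<omega>^(b-a)" using ab(1) by (simp flip: power_add)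
      then have "\<omega>^(b-a) = 1" using ab w0 by simp
      moreover have "0 < b - a" "b - a < m" using ab by auto
      ultimately show False using assms(4) by (auto simp: primitive_root_def)
    qed
    show "i = j" using key[of i j] key[of j i] ij wij by (metis lessThan_iff linorder_neqE_nat)
  qed
  have cardG: "finite (cyc_gen ?A ?H) \<and> card (cyc_gen ?A ?H) = m"
    unfolding G_eq2 using card_image[OF inj] by auto
  have CG: "cyc_ext_group F ?A ?mul ?D m (cyc_gen ?A ?H)"
    unfolding cyc_ext_group_def using autH autG cardG fixD by blast
  have Din: "nconst k \<in> ?A" for k using assms(1) by (auto simp: nconst_def ncarrier_def)
  have nadd_c: "nadd (nconst a) (nconst b) = nconst (a+b)" for a b
    by (auto simp: nadd_def nconst_def)
  have bijD: "bij_betw (\<lambda>x. nconst (a*x 0)) ?D ?D" if "a \<noteq> 0" for a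
    by (rule bij_betw_byWitness[where f'="\<lambda>x. nconst (inverse a * x 0)"])
       (auto simp: nconst_def that)
  have AD: "assoc_div_subalg ?A ?mul (nconst 1) ?D"
    unfolding assoc_div_subalg_def
  proof (intro conjI ballI impI)
    show "?D \<subseteq> ?A" using Din by blast
    show "nconst 1 \<in> ?D" by (rule rangeI)
    show "nadd x y \<in> ?D" if h: "x \<in> ?D" "y \<in> ?D" for x y
    proof -
      obtain a b where "x = nconst a" "y = nconst b" using h by blast
      then show ?thesis by (simp add: nadd_c)
    qed
    show "?mul x y \<in> ?D" if h: "x \<in> ?D" "y \<in> ?D" for x y
    proof -
      obtain a b where "x = nconst a" "y = nconst b" using h by blast
      then show ?thesis by (simp add: nconst_mul)
    qed
    show "(\<lambda>n. - x n) \<in> ?D" if h: "x \<in> ?D" for x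
    proof -
      obtain a where "x = nconst a" using h by blast
      then have "(\<lambda>n. - x n) = nconst (- a)" by (auto simp: nconst_def)
      then show ?thesis by simp
    qed
    show "?mul (?mul x y) z = ?mul x (?mul y z)" if h: "x \<in> ?D" "y \<in> ?D" "z \<in> ?D" for x y z
    proof -
      obtain a b c where "x = nconst a" "y = nconst b" "z = nconst c" using h by blast
      then show ?thesis by (simp add: nconst_mul mult.assoc)
    qed
    have "nconst 1 \<noteq> (\<lambda>n. 0::'k)" by (auto simp: nconst_def fun_eq_iff)
    moreover have "nconst 1 \<in> ?D" by (rule rangeI)
    ultimately show "?D \<noteq> {\<lambda>n. 0}" by blast
  next
    fix a assume aD: "a \<in> ?D" and an: "a \<noteq> (\<lambda>n. 0)"
    obtain a0 where a0: "a = nconst a0" using aD by blast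
    have nz: "nconst 0 = (\<lambda>n. 0::'k)" by (auto simp: nconst_def)
    have a00: "a0 \<noteq> 0" using a0 an nz by blast
    have e1: "?mul a x = nconst (a0 * x 0)" if h: "x \<in> ?D" for x
    proof -
      obtain b where b: "x = nconst b" using h by blast
      then have "x 0 = b" by (simp add: nconst_def)
      then show ?thesis using b a0 by (simp add: nconst_mul)
    qed
    have e2: "?mul x a = nconst (a0 * x 0)" if h: "x \<in> ?D" for x
    proof -
      obtain b where b: "x = nconst b" using h by blast
      then have "x 0 = b" by (simp add: nconst_def)
      then show ?thesis using b a0 by (simp add: nconst_mul mult.commute)
    qed
    have "bij_betw (\<lambda>x. ?mul a x) ?D ?D = bij_betw (\<lambda>x. nconst (a0 * x 0)) ?D ?D"
      by (rule bij_betw_cong) (rule e1)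
    then show "bij_betw (\<lambda>x. ?mul a x) ?D ?D" using bijD[OF a00] by (rule iffD2)
    have "bij_betw (\<lambda>x. ?mul x a) ?D ?D = bij_betw (\<lambda>x. nconst (a0 * x 0)) ?D ?D"
      by (rule bij_betw_cong) (rule e2)
    then show "bij_betw (\<lambda>x. ?mul x a) ?D ?D" using bijD[OF a00] by (rule iffD2)
  qed
  have FM: "free_left_module ?A ?mul ?D m"
    unfolding free_left_module_def
  proof (rule exI[of _ "\<lambda>i n. if n = i then 1 else 0"], intro conjI allI ballI impI)
    show "(\<lambda>n. if n = i then 1 else (0::'k)) \<in> ?A" if "i < m" for i
      using that by (auto simp: ncarrier_def)
    fix x assume x: "x \<in> ?A"
    show "\<exists>c. (\<forall>i<m. c i \<in> ?D) \<and> x = (\<lambda>n. \<Sum>i<m. ?mul (c i) (\<lambda>n. if n = i then 1 else 0) n)"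
    proof (intro exI[of _ "\<lambda>i. nconst (x i)"] conjI allI impI)
      show "nconst (x i) \<in> ?D" for i by simp
      show "x = (\<lambda>n. \<Sum>i<m. ?mul (nconst (x i)) (\<lambda>n. if n = i then 1 else 0) n)"
      proof
        fix n
        have "(\<Sum>i<m. ?mul (nconst (x i)) (\<lambda>n. if n = i then 1 else 0) n) = (\<Sum>i<m. if n = i then x i else 0)"
          by (intro sum.cong refl) (simp add: nconst_mul_e)
        also have "\<dots> = x n" using x by (auto simp: ncarrier_def)
        finally show "x n = (\<Sum>i<m. ?mul (nconst (x i)) (\<lambda>n. if n = i then 1 else 0) n)" by simp
      qed
    qed
  next
    fix c i assume h: "(\<forall>i<m. c i \<in> ?D) \<and> (\<lambda>n. \<Sum>i<m. ?mul (c i) (\<lambda>n. if n = i then 1 else 0) n) = (\<lambda>n. 0)"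
      and i: "i < m"
    have ci: "c j = nconst (c j 0)" if jm: "j < m" for j
    proof -
      obtain b where "c j = nconst b" using h jm by blast
      then show ?thesis by (simp add: nconst_def)
    qed
    have "(\<Sum>j<m. ?mul (c j) (\<lambda>n. if n = j then 1 else 0) i) = 0" using h by meson
    moreover have "(\<Sum>j<m. ?mul (c j) (\<lambda>n. if n = j then 1 else 0) i) = (\<Sum>j<m. if i = j then c j 0 else 0)"
      by (intro sum.cong refl) (metis ci lessThan_iff nconst_mul_e)
    ultimately have "c i 0 = 0" using i by simp
    then show "c i = (\<lambda>n. 0)" using ci[OF i] by (auto simp: nconst_def fun_eq_iff)
  qed
  show ?thesis unfolding nacyc_ext_def using assms(6) AD FM CG by blast
qed

end
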